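(* Let $\phi$ be a partial flow on a metric space $X$. Every isolated set $\Lambda$ of $\phi$ admits a catenary function.
   Context: A partial flow on a metric space $X$ is a continuous map $\phi\colon\Gamma\to X$ on an open set $\Gamma\subset\mathbb{R}\times X$. Here $\Gamma_x=\{t:(t,x)\in\Gamma\}$ is a connected set containing $0$, $\Gamma_{\phi_t(x)}=\Gamma_x-t$, $\phi_0=\mathrm{id}$, and $\phi_s\phi_t=\phi_{s+t}$ where defined. A $\phi$-invariant set $\Lambda$ is isolated if there is a compact neighborhood $N$ (an isolating neighborhood) such that $\phi_{\Gamma_x}(x)\subseteq N$ implies $x\in\Lambda$. $\dot{\mathcal L}(x)=\lim_{t\to0}(\mathcal L(\phi_t(x))-\mathcal L(x))/t$ and $\ddot{\mathcal L}=(\dot{\mathcal L})^{\cdot}$. A catenary function for $\Lambda$ is a continuous $\mathcal L\colon N\to\mathbb{R}$, with $N$ an isolating neighborhood of $\Lambda$, such that $\mathcal L(\Lambda)=0$, $\mathcal L(x)>0$ for $x\in N\setminus\Lambda$, and $\ddot{\mathcal L}=\mathcal L$ on $N$. *)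

theory Defs
  imports "HOL-Analysis.Analysis"
begin

definition dom_at :: "(real \<times> 'a) set \<Rightarrow> 'a \<Rightarrow> real set" where
  "dom_at \<Gamma> x = {t. (t, x) \<in> \<Gamma>}"

definition partial_flow :: "(real \<times> 'a::metric_space) set \<Rightarrow> (real \<times> 'a \<Rightarrow> 'a) \<Rightarrow> bool" where
  "partial_flow \<Gamma> \<phi> \<longleftrightarrow>
     open \<Gamma> \<and> continuous_on \<Gamma> \<phi> \<and>
     (\<forall>x. 0 \<in> dom_at \<Gamma> x \<and> connected (dom_at \<Gamma> x)) \<and>
     (\<forall>t x. (t, x) \<in> \<Gamma> \<longrightarrow> dom_at \<Gamma> (\<phi> (t, x)) = (\<lambda>s. s - t) ` dom_at \<Gamma> x) \<and>
     (\<forall>x. \<phi> (0, x) = x) \<and>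
     (\<forall>s t x. (t, x) \<in> \<Gamma> \<longrightarrow> (s, \<phi> (t, x)) \<in> \<Gamma> \<longrightarrow> \<phi> (s, \<phi> (t, x)) = \<phi> (s + t, x))"

definition invariant_set :: "(real \<times> 'a) set \<Rightarrow> (real \<times> 'a \<Rightarrow> 'a) \<Rightarrow> 'a set \<Rightarrow> bool" where
  "invariant_set \<Gamma> \<phi> \<Lambda> \<longleftrightarrow> (\<forall>x\<in>\<Lambda>. \<forall>t\<in>dom_at \<Gamma> x. \<phi> (t, x) \<in> \<Lambda>)"

definition isolating_nbhd :: "(real \<times> 'a::metric_space) set \<Rightarrow> (real \<times> 'a \<Rightarrow> 'a) \<Rightarrow> 'a set \<Rightarrow> 'a set \<Rightarrow> bool" where
  "isolating_nbhd \<Gamma> \<phi> \<Lambda> N \<longleftrightarrow> compact N \<and> \<Lambda> \<subseteq> interior N \<and>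
     (\<forall>x. (\<lambda>t. \<phi> (t, x)) ` dom_at \<Gamma> x \<subseteq> N \<longrightarrow> x \<in> \<Lambda>)"

definition isolated_set :: "(real \<times> 'a::metric_space) set \<Rightarrow> (real \<times> 'a \<Rightarrow> 'a) \<Rightarrow> 'a set \<Rightarrow> bool" where
  "isolated_set \<Gamma> \<phi> \<Lambda> \<longleftrightarrow> invariant_set \<Gamma> \<phi> \<Lambda> \<and> (\<exists>N. isolating_nbhd \<Gamma> \<phi> \<Lambda> N)"

definition has_orbital_deriv ::
  "(real \<times> 'a) set \<Rightarrow> (real \<times> 'a \<Rightarrow> 'a) \<Rightarrow> 'a set \<Rightarrow> ('a \<Rightarrow> real) \<Rightarrow> real \<Rightarrow> 'a \<Rightarrow> bool" where
  "has_orbital_deriv \<Gamma> \<phi> N L D x \<longleftrightarrow>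
     ((\<lambda>t. (L (\<phi> (t, x)) - L x) / t) \<longlongrightarrow> D)
       (at 0 within {t \<in> dom_at \<Gamma> x. \<phi> (t, x) \<in> N})"

definition catenary_function ::
  "(real \<times> 'a::metric_space) set \<Rightarrow> (real \<times> 'a \<Rightarrow> 'a) \<Rightarrow> 'a set \<Rightarrow> 'a set \<Rightarrow> ('a \<Rightarrow> real) \<Rightarrow> bool" where
  "catenary_function \<Gamma> \<phi> \<Lambda> N L \<longleftrightarrow>
     isolating_nbhd \<Gamma> \<phi> \<Lambda> N \<and> continuous_on N L \<and>
     (\<forall>x\<in>\<Lambda>. L x = 0) \<and> (\<forall>x\<in>N - \<Lambda>. L x > 0) \<and>
     (\<exists>Ld. (\<forall>x\<in>N. has_orbital_deriv \<Gamma> \<phi> N L (Ld x) x) \<and>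
           (\<forall>x\<in>N. has_orbital_deriv \<Gamma> \<phi> N Ld (L x) x))"

end

theory Submission
  imports Defs
begin


lemma dist_pair_lt:
  fixes a c :: "'a::metric_space" and b e :: "'b::metric_space"
  assumes "dist a c < d/2" "dist b e < d/2"
  shows "dist (a,b) (c,e) < d"
proof -
  have "dist (a,b) (c,e) = sqrt ((dist a c)\<^sup>2 + (dist b e)\<^sup>2)" by (rule dist_Pair_Pair)
  also have "\<dots> \<le> sqrt ((dist a c)\<^sup>2) + sqrt ((dist b e)\<^sup>2)"
    by (rule sqrt_add_le_add_sqrt) auto
  also have "\<dots> = dist a c + dist b e" by simp
  finally show ?thesis using assms by linarith
qed

lemma pf_open: "partial_flow \<Gamma> \<phi> \<Longrightarrow> open \<Gamma>"
  by (simp add: partial_flow_def)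

lemma pf_zero: "partial_flow \<Gamma> \<phi> \<Longrightarrow> (0, x) \<in> \<Gamma>"
  by (simp add: partial_flow_def dom_at_def)

lemma pf_id: "partial_flow \<Gamma> \<phi> \<Longrightarrow> \<phi> (0, x) = x"
  by (simp add: partial_flow_def)

lemma pf_interval:
  assumes "partial_flow \<Gamma> \<phi>" "(a, x) \<in> \<Gamma>" "(b, x) \<in> \<Gamma>" "a \<le> s" "s \<le> b"
  shows "(s, x) \<in> \<Gamma>"
proof -
  have "connected (dom_at \<Gamma> x)" using assms(1) by (simp add: partial_flow_def)
  then show ?thesis using assms(2-) unfolding connected_iff_interval dom_at_def by blast
qed

lemma pf_shift:
  assumes "partial_flow \<Gamma> \<phi>" "(t, x) \<in> \<Gamma>"
  shows "(v, \<phi> (t, x)) \<in> \<Gamma> \<longleftrightarrow> (v + t, x) \<in> \<Gamma>"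
proof -
  have "dom_at \<Gamma> (\<phi> (t, x)) = (\<lambda>s. s - t) ` dom_at \<Gamma> x"
    using assms by (simp add: partial_flow_def)
  then have "v \<in> dom_at \<Gamma> (\<phi> (t, x)) \<longleftrightarrow> v \<in> (\<lambda>s. s - t) ` dom_at \<Gamma> x" by simp
  also have "\<dots> \<longleftrightarrow> v + t \<in> dom_at \<Gamma> x"
    by (auto simp: image_iff intro!: bexI[of _ "v+t"])
  finally show ?thesis by (simp add: dom_at_def)
qed

lemma pf_comp:
  assumes "partial_flow \<Gamma> \<phi>" "(t, x) \<in> \<Gamma>" "(v, \<phi> (t, x)) \<in> \<Gamma>"
  shows "\<phi> (v, \<phi> (t, x)) = \<phi> (v + t, x)"
  using assms by (simp add: partial_flow_def)

lemma pf_isCont: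
  assumes "partial_flow \<Gamma> \<phi>" "p \<in> \<Gamma>"
  shows "isCont \<phi> p"
  using assms continuous_on_eq_continuous_at[of \<Gamma> \<phi>] by (simp add: partial_flow_def)

lemma pf_exit:
  assumes pf: "partial_flow \<Gamma> \<phi>" and N: "compact N" and v: "0 \<le> v" "(v, x) \<notin> \<Gamma>"
  shows "\<exists>r. 0 \<le> r \<and> r < v \<and> (r, x) \<in> \<Gamma> \<and> \<phi> (r, x) \<notin> N"
proof (rule ccontr)
  assume H: "\<not> ?thesis"
  define S where "S = {r. 0 \<le> r \<and> r \<le> v \<and> (r, x) \<in> \<Gamma>}"
  define T where "T = Sup S"
  have S0: "0 \<in> S" using pf v by (simp add: S_def pf_zero)
  have Sbdd: "bdd_above S" unfolding S_def by (rule bdd_aboveI[of _ v]) auto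
  have T0: "0 \<le> T" unfolding T_def using S0 Sbdd by (rule cSup_upper)
  have Tv: "T \<le> v" unfolding T_def using S0 by (intro cSup_least) (auto simp: S_def)
  have below: "(r, x) \<in> \<Gamma>" if "0 \<le> r" "r < T" for r
  proof -
    obtain s where "s \<in> S" "r < s" using \<open>r < T\<close> less_cSup_iff[of S r] S0 Sbdd T_def by auto
    then show ?thesis using pf_interval[OF pf, of 0 x s r] pf that by (auto simp: S_def pf_zero)
  qed
  have inN: "\<phi> (r, x) \<in> N" if "0 \<le> r" "r < T" for r
    using H below[OF that] that Tv by auto
  have TG: "(T, x) \<notin> \<Gamma>"
  proof
    assume TG: "(T, x) \<in> \<Gamma>"
    then have "T \<noteq> v" using v by auto
    with Tv have Tlt: "T < v" by simp
    obtain d where d: "d > 0" "ball (T, x) d \<subseteq> \<Gamma>"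
      using pf_open[OF pf] TG open_contains_ball by blast
    define s where "s = T + min d (v - T) / 2"
    have "dist (s, x) (T, x) < d" using d Tlt
      by (simp add: dist_Pair_Pair s_def dist_real_def)
    then have "(s, x) \<in> \<Gamma>" using d by (auto simp: dist_commute)
    then have "s \<in> S" using T0 Tlt d by (auto simp: S_def s_def min_def field_simps)
    then have "s \<le> T" unfolding T_def using Sbdd by (rule cSup_upper)
    then show False using d Tlt by (simp add: s_def)
  qed
  have Tpos: "0 < T" using T0 TG pf_zero[OF pf, of x] by (cases "T = 0") auto
  define t where "t n = T - T / (real n + 2)" for n :: nat
  have t_rng: "0 \<le> t n \<and> t n < T" for n
    using Tpos by (simp add: t_def field_simps)
  have t_lim: "t \<longlonglongrightarrow> T"
  proof -
    have "(\<lambda>n. T / (real n + 2)) \<longlonglongrightarrow> 0"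
    proof -
      have "(\<lambda>n. T / real (n + 2)) \<longlonglongrightarrow> 0"
        by (rule LIMSEQ_ignore_initial_segment[OF lim_const_over_n, of T 2]) 
      then show ?thesis by (simp add: add.commute)
    qed
    from tendsto_diff[OF tendsto_const[of T] this] show ?thesis by (simp add: t_def[abs_def])
  qed
  have "\<forall>n. \<phi> (t n, x) \<in> N" using inN t_rng by auto
  then obtain y rr where y: "y \<in> N" "strict_mono rr" "((\<lambda>n. \<phi> (t n, x)) \<circ> rr) \<longlonglongrightarrow> y"
    using compact_imp_seq_compact[OF N] unfolding seq_compact_def by (metis (no_types, lifting))
  have y0: "(0, y) \<in> \<Gamma>" using pf by (rule pf_zero)
  obtain d where d: "d > 0" "ball (0, y) d \<subseteq> \<Gamma>"
    using pf_open[OF pf] y0 open_contains_ball by blast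
  have tl: "(t \<circ> rr) \<longlonglongrightarrow> T" using LIMSEQ_subseq_LIMSEQ[OF t_lim y(2)] .
  have ev1: "eventually (\<lambda>n. dist ((t \<circ> rr) n) T < d/4) sequentially"
    using tl[unfolded tendsto_iff, rule_format, of "d/4"] d(1) by simp
  have ev2: "eventually (\<lambda>n. dist (((\<lambda>n. \<phi> (t n, x)) \<circ> rr) n) y < d/2) sequentially"
    using y(3)[unfolded tendsto_iff, rule_format, of "d/2"] d(1) by simp
  obtain n where n1: "dist (t (rr n)) T < d/4" and n2: "dist (\<phi> (t (rr n), x)) y < d/2"
  proof -
    from eventually_conj[OF ev1 ev2] obtain M where
      "\<forall>n\<ge>M. dist ((t \<circ> rr) n) T < d/4 \<and> dist (((\<lambda>n. \<phi> (t n, x)) \<circ> rr) n) y < d/2"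
      unfolding eventually_sequentially by blast
    then show ?thesis using that[of M] by simp
  qed
  define s where "s = t (rr n)"
  have "dist (d/4, \<phi> (s, x)) (0, y) < d"
    by (rule dist_pair_lt) (use n2 d in \<open>auto simp: s_def dist_real_def\<close>)
  then have "(d/4, \<phi> (s, x)) \<in> \<Gamma>" using d by (auto simp: dist_commute)
  then have sG: "(d/4 + s, x) \<in> \<Gamma>"
  proof -
    have "(s, x) \<in> \<Gamma>" using below[of s] t_rng by (simp add: s_def)
    from pf_shift[OF pf this, of "d/4"] show ?thesis using \<open>(d/4, \<phi> (s, x)) \<in> \<Gamma>\<close> by simp
  qed
  have "T < d/4 + s" using n1 unfolding s_def dist_real_def by linarith
  have sge: "0 \<le> s" using t_rng by (simp add: s_def)
  define m where "m = min (d/4 + s) v"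
  have "(m, x) \<in> \<Gamma>"
    using pf_interval[OF pf pf_zero[OF pf, of x] sG, of m] sge d v by (auto simp: m_def)
  then show False
  proof (cases "d/4 + s \<le> v")
    case True
    then have "m \<in> S" using \<open>(m, x) \<in> \<Gamma>\<close> sge d by (simp add: S_def m_def)
    then have "m \<le> T" unfolding T_def using Sbdd by (rule cSup_upper)
    then show False using True \<open>T < d/4 + s\<close> by (simp add: m_def)
  next
    case False
    then show False using \<open>(m, x) \<in> \<Gamma>\<close> v by (simp add: m_def)
  qed
qed



lemma aux_half: "\<bar>v - w\<bar> < (w - r)/2 \<Longrightarrow> r < w \<Longrightarrow> r < (v::real)"
proof -
  assume a: "\<bar>v - w\<bar> < (w - r)/2" "r < w"
  then have "- (v - w) < (w - r)/2" by (simp only: abs_less_iff)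
  then show ?thesis using a(2) by (simp add: field_simps)
qed

lemma isCont_nhds: "isCont f x \<Longrightarrow> (f \<longlongrightarrow> f x) (nhds x)"
  by (simp add: isCont_def tendsto_at_iff_tendsto_nhds)

definition Pf :: "(real \<times> 'a) set \<Rightarrow> (real \<times> 'a \<Rightarrow> 'a) \<Rightarrow> ('a \<Rightarrow> real) \<Rightarrow> 'a \<Rightarrow> real" where
  "Pf \<Gamma> \<phi> k x = (SUP v\<in>{v. (v, x) \<in> \<Gamma> \<and> 0 \<le> v}. exp (-v) * k (\<phi> (v, x)))"

lemma Pf_bdd:
  fixes \<Gamma> :: "(real \<times> 'a) set"
  assumes k01: "\<And>y. 0 \<le> k y \<and> k y \<le> 1"
  shows "bdd_above ((\<lambda>v. exp (-v) * k (\<phi> (v, x))) ` {v. (v, x) \<in> \<Gamma> \<and> 0 \<le> v})"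
proof (rule bdd_aboveI[of _ 1])
  fix z assume "z \<in> (\<lambda>v. exp (-v) * k (\<phi> (v, x))) ` {v. (v, x) \<in> \<Gamma> \<and> 0 \<le> v}"
  then obtain v where v: "0 \<le> v" "z = exp (-v) * k (\<phi> (v, x))" by auto
  have "exp (-v) \<le> 1" using v by simp
  then show "z \<le> 1" using v k01[of "\<phi> (v, x)"] by (simp add: mult_le_one)
qed

lemma Pf_ne: "partial_flow \<Gamma> \<phi> \<Longrightarrow> {v. (v, x) \<in> \<Gamma> \<and> 0 \<le> v} \<noteq> {}"
  using pf_zero by fastforce

lemma Pf_upper:
  fixes \<Gamma> :: "(real \<times> 'a) set"
  assumes k01: "\<And>y. 0 \<le> k y \<and> k y \<le> 1" and "(v, x) \<in> \<Gamma>" "0 \<le> v"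
  shows "exp (-v) * k (\<phi> (v, x)) \<le> Pf \<Gamma> \<phi> k x"
  unfolding Pf_def by (rule cSUP_upper) (use assms Pf_bdd[OF k01] in auto)

lemma Pf_nonneg:
  assumes "partial_flow \<Gamma> \<phi>" "\<And>y. 0 \<le> k y \<and> k y \<le> 1"
  shows "0 \<le> Pf \<Gamma> \<phi> k x"
proof -
  have "exp (-0) * k (\<phi> (0, x)) \<le> Pf \<Gamma> \<phi> k x"
    by (rule Pf_upper) (use assms pf_zero in auto)
  moreover have "0 \<le> exp (-0) * k (\<phi> (0, x))" using assms(2) by simp
  ultimately show ?thesis by linarith
qed

lemma exp_small:
  fixes e v :: real assumes "e > 0" "v > 2 / e"
  shows "exp (-v) < e / 2"
proof -
  have "v < exp v" using exp_gt_zero[of v] exp_ge_add_one_self[of v] by linarith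
  then have "2 / e < exp v" using assms by linarith
  then have "2 < e * exp v" using assms(1) by (simp add: field_simps)
  then show ?thesis by (simp add: exp_minus field_simps)
qed

lemma Pf_cont:
  assumes pf: "partial_flow \<Gamma> \<phi>" and N: "compact N" and kc: "continuous_on UNIV k"
    and k01: "\<And>y. 0 \<le> k y \<and> k y \<le> 1" and kN: "\<And>y. y \<notin> N \<Longrightarrow> k y = 1"
  shows "isCont (Pf \<Gamma> \<phi> k) x"
proof -
  define F where "F v y = exp (-v) * k (\<phi> (v, y))" for v y
  define I where "I y = {v. (v, y) \<in> \<Gamma> \<and> 0 \<le> v}" for y
  have PfF: "Pf \<Gamma> \<phi> k y = (SUP v\<in>I y. F v y)" for y by (simp add: Pf_def F_def I_def)
  have bdd: "bdd_above ((\<lambda>v. F v y) ` I y)" for y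
    using Pf_bdd[OF k01] by (simp add: F_def I_def)
  have ne: "I y \<noteq> {}" for y using Pf_ne[OF pf] by (simp add: I_def)
  have upper: "F v y \<le> Pf \<Gamma> \<phi> k y" if "(v, y) \<in> \<Gamma>" "0 \<le> v" for v y
    using Pf_upper[OF k01 that] by (simp add: F_def)
  have Fle: "F v y \<le> exp (-v)" for v y
    using k01[of "\<phi> (v, y)"] by (simp add: F_def mult_left_le)
  have kcont: "isCont k z" for z using kc by (simp add: continuous_on_eq_continuous_at)
  have Gcont: "isCont (\<lambda>p. exp (- fst p) * k (\<phi> p)) p" if "p \<in> \<Gamma>" for p
    by (intro continuous_intros isCont_o2[OF pf_isCont[OF pf that] kcont])
  show ?thesis
    unfolding isCont_def tendsto_iff
  proof (intro allI impI)
    fix e :: real assume e: "e > 0"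
    have lo: "eventually (\<lambda>y. Pf \<Gamma> \<phi> k x - e < Pf \<Gamma> \<phi> k y) (nhds x)"
    proof -
      have "Pf \<Gamma> \<phi> k x - e < (SUP v\<in>I x. F v x)" using e PfF by simp
      then obtain v where v: "v \<in> I x" "Pf \<Gamma> \<phi> k x - e < F v x"
        using less_cSUP_iff[OF ne bdd] by blast
      have pc: "isCont (\<lambda>y. (v, y)) x" by simp
      have vx: "(v, x) \<in> \<Gamma>" using v by (simp add: I_def)
      have "isCont (\<lambda>y. F v y) x"
        unfolding F_def by (intro continuous_intros isCont_o2[OF pc pf_isCont[OF pf vx]] isCont_o2[OF _ kcont])
      then have "((\<lambda>y. F v y) \<longlongrightarrow> F v x) (nhds x)" by (simp add: isCont_def tendsto_at_iff_tendsto_nhds)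
      then have ev1: "eventually (\<lambda>y. Pf \<Gamma> \<phi> k x - e < F v y) (nhds x)"
        using v(2) order_tendstoD(1) by blast
      have "((\<lambda>y. (v, y)) \<longlongrightarrow> (v, x)) (nhds x)"
        using pc by (simp add: isCont_def tendsto_at_iff_tendsto_nhds)
      then have ev2: "eventually (\<lambda>y. (v, y) \<in> \<Gamma>) (nhds x)"
        using topological_tendstoD[OF _ pf_open[OF pf] vx] by blast
      show ?thesis using ev1 ev2
      proof eventually_elim
        case (elim y)
        then show ?case using upper[of v y] v(1) by (auto simp: I_def)
      qed
    qed
    define e2 where "e2 = e / 2"
    define V0 where "V0 = 2 / e"
    define K where "K = {0..V0}"
    have Pfx0: "0 \<le> Pf \<Gamma> \<phi> k x" by (rule Pf_nonneg[OF pf k01])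
    have loc: "\<exists>\<eta>>0. eventually (\<lambda>y. \<forall>v. \<bar>v - w\<bar> < \<eta> \<longrightarrow> (v, y) \<in> \<Gamma> \<longrightarrow> F v y < Pf \<Gamma> \<phi> k x + e2) (nhds x)"
      if w: "w \<in> K" for w
    proof (cases "(w, x) \<in> \<Gamma>")
      case True
      have "((\<lambda>p. exp (- fst p) * k (\<phi> p)) \<longlongrightarrow> exp (- fst (w, x)) * k (\<phi> (w, x))) (nhds (w, x))"
        using isCont_nhds[OF Gcont[OF True]] .
      then have "eventually (\<lambda>p. exp (- fst p) * k (\<phi> p) < F w x + e2) (nhds (w, x))"
        using order_tendstoD(2)[of _ "F w x" _ "F w x + e2"] e by (simp add: F_def e2_def)
      moreover have "eventually (\<lambda>p. p \<in> \<Gamma>) (nhds (w, x))"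
        using eventually_nhds pf_open[OF pf] True by blast
      ultimately have "eventually (\<lambda>p. p \<in> \<Gamma> \<and> exp (- fst p) * k (\<phi> p) < F w x + e2) (nhds (w, x))"
        by (rule eventually_conj[rotated])
      then obtain d where d: "d > 0" "\<And>p. dist p (w, x) < d \<Longrightarrow> p \<in> \<Gamma> \<and> exp (- fst p) * k (\<phi> p) < F w x + e2"
        unfolding eventually_nhds_metric by blast
      have Fw: "F w x \<le> Pf \<Gamma> \<phi> k x" using upper[OF True] w by (simp add: K_def)
      have "eventually (\<lambda>y. dist y x < d/2) (nhds x)"
        unfolding eventually_nhds_metric using d(1) by (intro exI[of _ "d/2"]) auto
      then have "eventually (\<lambda>y. \<forall>v. \<bar>v - w\<bar> < d/2 \<longrightarrow> (v, y) \<in> \<Gamma> \<longrightarrow> F v y < Pf \<Gamma> \<phi> k x + e2) (nhds x)"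
      proof eventually_elim
        case (elim y)
        show ?case
        proof (intro allI impI)
          fix v assume "\<bar>v - w\<bar> < d/2" "(v, y) \<in> \<Gamma>"
          then have "dist (v, y) (w, x) < d" using elim by (intro dist_pair_lt) (auto simp: dist_real_def)
          then show "F v y < Pf \<Gamma> \<phi> k x + e2" using d(2)[of "(v, y)"] Fw by (simp add: F_def)
        qed
      qed
      then show ?thesis using d(1) by (intro exI[of _ "d/2"]) auto
    next
      case False
      have w0: "0 \<le> w" using w by (simp add: K_def)
      obtain r where r: "0 \<le> r" "r < w" "(r, x) \<in> \<Gamma>" "\<phi> (r, x) \<notin> N"
        using pf_exit[OF pf N w0 False] by blast
      have "exp (-r) = F r x" using kN[OF r(4)] by (simp add: F_def)
      also have "\<dots> \<le> Pf \<Gamma> \<phi> k x" using upper r by simp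
      finally have Pr: "exp (-r) \<le> Pf \<Gamma> \<phi> k x" .
      have "\<forall>v. \<bar>v - w\<bar> < (w - r)/2 \<longrightarrow> (v, y) \<in> \<Gamma> \<longrightarrow> F v y < Pf \<Gamma> \<phi> k x + e2" for y
      proof (intro allI impI)
        fix v assume "\<bar>v - w\<bar> < (w - r)/2"
        then have "r < v" using r(2) by (rule aux_half)
        then have ee: "exp (-v) < exp (-r)" by simp
        show "F v y < Pf \<Gamma> \<phi> k x + e2" using Fle[of v y] Pr e ee unfolding e2_def by linarith
      qed
      then show ?thesis using r by (intro exI[of _ "(w - r)/2"]) auto
    qed
    then have "\<forall>w\<in>K. \<exists>\<eta>. \<eta> > 0 \<and> eventually (\<lambda>y. \<forall>v. \<bar>v - w\<bar> < \<eta> \<longrightarrow> (v, y) \<in> \<Gamma> \<longrightarrow> F v y < Pf \<Gamma> \<phi> k x + e2) (nhds x)"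
      by blast
    from bchoice[OF this] obtain \<eta> where \<eta>0:
      "\<forall>w\<in>K. \<eta> w > 0 \<and> eventually (\<lambda>y. \<forall>v. \<bar>v - w\<bar> < \<eta> w \<longrightarrow> (v, y) \<in> \<Gamma> \<longrightarrow> F v y < Pf \<Gamma> \<phi> k x + e2) (nhds x)"
      by blast
    have \<eta>: "\<And>w. w \<in> K \<Longrightarrow> \<eta> w > 0"
      "\<And>w. w \<in> K \<Longrightarrow> eventually (\<lambda>y. \<forall>v. \<bar>v - w\<bar> < \<eta> w \<longrightarrow> (v, y) \<in> \<Gamma> \<longrightarrow> F v y < Pf \<Gamma> \<phi> k x + e2) (nhds x)"
      using \<eta>0 by auto
    obtain K' where K': "K' \<subseteq> K" "finite K'" "K \<subseteq> (\<Union>w\<in>K'. ball w (\<eta> w))"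
    proof (rule compactE_image[of K K "\<lambda>w. ball w (\<eta> w)"])
      show "compact K" by (simp add: K_def)
      show "K \<subseteq> (\<Union>w\<in>K. ball w (\<eta> w))"
      proof
        fix w assume "w \<in> K" then show "w \<in> (\<Union>w\<in>K. ball w (\<eta> w))" using \<eta>(1)[of w] by (intro UN_I[of w]) auto
      qed
    qed (simp_all add: open_ball)
    have "eventually (\<lambda>y. \<forall>w\<in>K'. \<forall>v. \<bar>v - w\<bar> < \<eta> w \<longrightarrow> (v, y) \<in> \<Gamma> \<longrightarrow> F v y < Pf \<Gamma> \<phi> k x + e2) (nhds x)"
      by (rule eventually_ball_finite[OF K'(2)]) (use \<eta>(2) K'(1) in auto)
    then have hi: "eventually (\<lambda>y. Pf \<Gamma> \<phi> k y < Pf \<Gamma> \<phi> k x + e) (nhds x)"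
    proof eventually_elim
      case (elim y)
      have "F v y \<le> Pf \<Gamma> \<phi> k x + e2" if v: "v \<in> I y" for v
      proof (cases "v \<le> V0")
        case True
        then have "v \<in> K" using v by (simp add: K_def I_def)
        then obtain w where "w \<in> K'" "dist w v < \<eta> w" using K'(3) by auto
        then have w1: "\<forall>v. \<bar>v - w\<bar> < \<eta> w \<longrightarrow> (v, y) \<in> \<Gamma> \<longrightarrow> F v y < Pf \<Gamma> \<phi> k x + e2"
          and w2: "\<bar>v - w\<bar> < \<eta> w" using elim by (auto simp: dist_real_def)
        have "(v, y) \<in> \<Gamma>" using v by (simp add: I_def)
        then show ?thesis using w1 w2 by (meson less_imp_le)
      next
        case False
        then have "exp (-v) < e / 2" using exp_small[OF e] by (simp add: V0_def)
        then show ?thesis using Fle[of v y] Pfx0 by (simp add: e2_def)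
      qed
      then have "(SUP v\<in>I y. F v y) \<le> Pf \<Gamma> \<phi> k x + e2" by (intro cSUP_least ne)
      then show ?case using PfF e by (simp add: e2_def)
    qed
    have "eventually (\<lambda>y. dist (Pf \<Gamma> \<phi> k y) (Pf \<Gamma> \<phi> k x) < e) (nhds x)"
      using lo hi by eventually_elim (auto simp: dist_real_def abs_less_iff)
    then show "eventually (\<lambda>y. dist (Pf \<Gamma> \<phi> k y) (Pf \<Gamma> \<phi> k x) < e) (at x)"
      unfolding eventually_at_filter by eventually_elim auto
  qed
qed




lemma cSup_cmult:
  fixes S :: "real set"
  assumes "c > 0" "S \<noteq> {}" "bdd_above S"
  shows "Sup ((*) c ` S) = c * Sup S"
proof (rule antisym)
  show "Sup ((*) c ` S) \<le> c * Sup S"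
    using assms by (intro cSup_least) (auto intro!: mult_left_mono cSup_upper)
  have bdd2: "bdd_above ((*) c ` S)"
  proof -
    obtain M where "\<And>s. s \<in> S \<Longrightarrow> s \<le> M" using assms(3) by (auto simp: bdd_above_def)
    then show ?thesis using assms(1) by (intro bdd_aboveI[of _ "c * M"]) (auto intro!: mult_left_mono)
  qed
  have "Sup S \<le> Sup ((*) c ` S) / c"
  proof (rule cSup_least[OF assms(2)])
    fix s assume "s \<in> S"
    then have "c * s \<le> Sup ((*) c ` S)" by (intro cSup_upper bdd2) auto
    then show "s \<le> Sup ((*) c ` S) / c" using assms(1) by (simp add: field_simps)
  qed
  then show "c * Sup S \<le> Sup ((*) c ` S)" using assms(1) by (simp add: field_simps)
qed

lemma Pf_shift:
  fixes \<Gamma> :: "(real \<times> 'a::metric_space) set"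
  assumes pf: "partial_flow \<Gamma> \<phi>" and k01: "\<And>y. 0 \<le> k y \<and> k y \<le> 1"
    and d: "\<delta> > 0" and hz: "\<And>s. \<bar>s\<bar> < \<delta> \<Longrightarrow> (s, x) \<in> \<Gamma> \<and> k (\<phi> (s, x)) = 0"
    and t: "\<bar>t\<bar> < \<delta>"
  shows "Pf \<Gamma> \<phi> k (\<phi> (t, x)) = exp t * Pf \<Gamma> \<phi> k x"
proof -
  define G where "G w = exp (-w) * k (\<phi> (w, x))" for w
  define A where "A = {v. (v, \<phi> (t, x)) \<in> \<Gamma> \<and> 0 \<le> v}"
  define B where "B s = {w. (w, x) \<in> \<Gamma> \<and> s \<le> w}" for s
  have tx: "(t, x) \<in> \<Gamma>" using hz t by blast
  have G0: "G w = 0" if "\<bar>w\<bar> < \<delta>" for w using hz[OF that] by (simp add: G_def)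
  have img1: "(\<lambda>v. exp (-v) * k (\<phi> (v, \<phi> (t, x)))) ` A = (\<lambda>w. exp t * G w) ` B t"
  proof (intro set_eqI iffI)
    fix z assume "z \<in> (\<lambda>v. exp (-v) * k (\<phi> (v, \<phi> (t, x)))) ` A"
    then obtain v where v: "(v, \<phi> (t, x)) \<in> \<Gamma>" "0 \<le> v" "z = exp (-v) * k (\<phi> (v, \<phi> (t, x)))"
      by (auto simp: A_def)
    have vt: "(v + t, x) \<in> \<Gamma>" using pf_shift[OF pf tx] v(1) by simp
    have "z = exp t * G (v + t)"
      using v(3) pf_comp[OF pf tx v(1)] by (simp add: G_def mult_exp_exp)
    then show "z \<in> (\<lambda>w. exp t * G w) ` B t" using vt v(2) by (auto simp: B_def)
  next
    fix z assume "z \<in> (\<lambda>w. exp t * G w) ` B t"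
    then obtain w where w: "(w, x) \<in> \<Gamma>" "t \<le> w" "z = exp t * G w" by (auto simp: B_def)
    have v1: "(w - t, \<phi> (t, x)) \<in> \<Gamma>" using pf_shift[OF pf tx, of "w - t"] w(1) by simp
    have "z = exp (-(w - t)) * k (\<phi> (w - t, \<phi> (t, x)))"
      using w(3) pf_comp[OF pf tx v1] by (simp add: G_def mult_exp_exp)
    then show "z \<in> (\<lambda>v. exp (-v) * k (\<phi> (v, \<phi> (t, x)))) ` A"
      using v1 w(2) unfolding A_def by (intro image_eqI[of _ _ "w - t"]) auto
  qed
  have img2: "G ` B t = G ` B 0"
  proof (intro set_eqI iffI)
    fix z assume "z \<in> G ` B t"
    then obtain w where w: "(w, x) \<in> \<Gamma>" "t \<le> w" "z = G w" by (auto simp: B_def)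
    show "z \<in> G ` B 0"
    proof (cases "0 \<le> w")
      case True then show ?thesis using w by (auto simp: B_def)
    next
      case False
      then have "\<bar>w\<bar> < \<delta>" using w(2) t by linarith
      then have "z = G 0" using w(3) G0[of w] G0[of 0] d by simp
      moreover have "0 \<in> B 0" using pf_zero[OF pf] by (simp add: B_def)
      ultimately show ?thesis by blast
    qed
  next
    fix z assume "z \<in> G ` B 0"
    then obtain w where w: "(w, x) \<in> \<Gamma>" "0 \<le> w" "z = G w" by (auto simp: B_def)
    show "z \<in> G ` B t"
    proof (cases "t \<le> w")
      case True then show ?thesis using w by (auto simp: B_def)
    next
      case False
      then have "\<bar>w\<bar> < \<delta>" using w(2) t by linarith
      then have "z = G t" using w(3) G0[of w] G0[of t] t by simp
      moreover have "t \<in> B t" using tx by (simp add: B_def)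
      ultimately show ?thesis by blast
    qed
  qed
  have bdd: "bdd_above (G ` B 0)"
    using Pf_bdd[OF k01, where \<phi>=\<phi> and x=x and \<Gamma>=\<Gamma>] by (simp add: G_def B_def)
  have ne: "G ` B 0 \<noteq> {}" using pf_zero[OF pf, of x] by (auto simp: B_def)
  have "Pf \<Gamma> \<phi> k (\<phi> (t, x)) = Sup ((\<lambda>w. exp t * G w) ` B t)"
    unfolding Pf_def A_def[symmetric] img1 ..
  also have "(\<lambda>w. exp t * G w) ` B t = (*) (exp t) ` (G ` B 0)"
    by (simp add: image_image[symmetric] img2)
  also have "Sup \<dots> = exp t * Sup (G ` B 0)" by (rule cSup_cmult[OF _ ne bdd]) simp
  also have "Sup (G ` B 0) = Pf \<Gamma> \<phi> k x" by (simp add: Pf_def G_def B_def)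
  finally show ?thesis .
qed

definition rG :: "(real \<times> 'a) set \<Rightarrow> (real \<times> 'a) set" where
  "rG \<Gamma> = {p. (- fst p, snd p) \<in> \<Gamma>}"

definition rphi :: "(real \<times> 'a \<Rightarrow> 'a) \<Rightarrow> real \<times> 'a \<Rightarrow> 'a" where
  "rphi \<phi> p = \<phi> (- fst p, snd p)"

lemma rev_pf:
  fixes \<Gamma> :: "(real \<times> 'a::metric_space) set"
  assumes pf: "partial_flow \<Gamma> \<phi>"
  shows "partial_flow (rG \<Gamma>) (rphi \<phi>)"
proof -
  have cm: "continuous_on UNIV (\<lambda>p::real \<times> 'a. (- fst p, snd p))"
    by (intro continuous_intros)
  have op: "open (rG \<Gamma>)"
  proof -
    have "rG \<Gamma> = (\<lambda>p::real \<times> 'a. (- fst p, snd p)) -` \<Gamma>" by (auto simp: rG_def)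
    then show ?thesis using open_vimage[OF pf_open[OF pf] cm] by simp
  qed
  have ct: "continuous_on (rG \<Gamma>) (rphi \<phi>)"
  proof -
    have "continuous_on (rG \<Gamma>) (\<phi> \<circ> (\<lambda>p. (- fst p, snd p)))"
      by (rule continuous_on_compose) (auto intro: continuous_on_subset[OF cm] continuous_on_subset[OF pf[unfolded partial_flow_def, THEN conjunct2, THEN conjunct1]] simp: rG_def)
    then show ?thesis by (simp add: rphi_def[abs_def] o_def)
  qed
  have dom: "(v, x) \<in> rG \<Gamma> \<longleftrightarrow> (-v, x) \<in> \<Gamma>" for v x by (simp add: rG_def)
  have conn: "connected (dom_at (rG \<Gamma>) x)" for x
    unfolding connected_iff_interval dom_at_def dom
    using pf_interval[OF pf] by (metis mem_Collect_eq neg_le_iff_le)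
  have zero: "0 \<in> dom_at (rG \<Gamma>) x" for x using pf_zero[OF pf] by (simp add: dom_at_def dom)
  have shift: "dom_at (rG \<Gamma>) (rphi \<phi> (t, x)) = (\<lambda>s. s - t) ` dom_at (rG \<Gamma>) x"
    if "(t, x) \<in> rG \<Gamma>" for t x
  proof -
    have tx: "(-t, x) \<in> \<Gamma>" using that by (simp add: dom)
    show ?thesis
    proof (intro set_eqI)
      fix v
      have "v \<in> dom_at (rG \<Gamma>) (rphi \<phi> (t, x)) \<longleftrightarrow> (-v + -t, x) \<in> \<Gamma>"
        using pf_shift[OF pf tx, of "-v"] by (simp add: dom_at_def dom rphi_def)
      also have "\<dots> \<longleftrightarrow> v \<in> (\<lambda>s. s - t) ` dom_at (rG \<Gamma>) x"
        by (auto simp: dom_at_def dom image_iff intro!: exI[of _ "v + t"])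
      finally show "v \<in> dom_at (rG \<Gamma>) (rphi \<phi> (t, x)) \<longleftrightarrow> v \<in> (\<lambda>s. s - t) ` dom_at (rG \<Gamma>) x" .
    qed
  qed
  have comp: "rphi \<phi> (s, rphi \<phi> (t, x)) = rphi \<phi> (s + t, x)"
    if "(t, x) \<in> rG \<Gamma>" "(s, rphi \<phi> (t, x)) \<in> rG \<Gamma>" for s t x
  proof -
    have tx: "(-t, x) \<in> \<Gamma>" using that by (simp add: dom)
    have "(-s, \<phi> (-t, x)) \<in> \<Gamma>" using that(2) by (simp add: dom rphi_def)
    from pf_comp[OF pf tx this] show ?thesis by (simp add: rphi_def)
  qed
  show ?thesis unfolding partial_flow_def
    using op ct conn zero shift comp pf_id[OF pf] by (simp add: rphi_def)
qed




lemma lim_comb: "((\<lambda>t::real. (a * (exp t - 1) + b * (exp (-t) - 1)) / t) \<longlongrightarrow> a - b) (at 0)"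
proof -
  have "(exp has_field_derivative exp 0) (at (0::real))" by (rule DERIV_exp)
  then have h1: "((\<lambda>t::real. (exp t - 1) / t) \<longlongrightarrow> 1) (at 0)"
    by (simp add: has_field_derivative_iff)
  have "((\<lambda>t::real. exp (-t)) has_field_derivative exp (-0) * (-1)) (at 0)"
    by (rule derivative_eq_intros | simp)+
  then have h2: "((\<lambda>t::real. (exp (-t) - 1) / t) \<longlongrightarrow> -1) (at 0)"
    by (simp add: has_field_derivative_iff)
  have "((\<lambda>t. a * ((exp t - 1) / t) + b * ((exp (-t) - 1) / t)) \<longlongrightarrow> a * 1 + b * (-1)) (at (0::real))"
    by (intro tendsto_add tendsto_mult_left h1 h2)
  then show ?thesis by (simp add: add_divide_distrib)
qed

lemma Pf_zero_if:
  fixes \<Gamma> :: "(real \<times> 'a::metric_space) set"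
  assumes pf: "partial_flow \<Gamma> \<phi>" and h: "\<And>v. (v, x) \<in> \<Gamma> \<Longrightarrow> k (\<phi> (v, x)) = 0"
  shows "Pf \<Gamma> \<phi> k x = 0"
proof -
  have "(\<lambda>v. exp (-v) * k (\<phi> (v, x))) ` {v. (v, x) \<in> \<Gamma> \<and> 0 \<le> v} = {0}"
    using h pf_zero[OF pf, of x] by force
  then show ?thesis by (simp add: Pf_def)
qed




theorem mainTheorem9:
  fixes \<Gamma> :: "(real \<times> 'a::metric_space) set" and \<phi> :: "real \<times> 'a \<Rightarrow> 'a" and \<Lambda> :: "'a set"
  assumes "partial_flow \<Gamma> \<phi>"
    and "isolated_set \<Gamma> \<phi> \<Lambda>"
  shows "\<exists>N L. catenary_function \<Gamma> \<phi> \<Lambda> N L"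
proof -
  note pf = assms(1)
  have inv: "\<And>x t. x \<in> \<Lambda> \<Longrightarrow> (t, x) \<in> \<Gamma> \<Longrightarrow> \<phi> (t, x) \<in> \<Lambda>"
    using assms(2) by (auto simp: isolated_set_def invariant_set_def dom_at_def)
  obtain N where N: "isolating_nbhd \<Gamma> \<phi> \<Lambda> N" using assms(2) by (auto simp: isolated_set_def)
  have Nc: "compact N" and LN: "\<Lambda> \<subseteq> interior N"
    and Niso: "\<And>x. (\<lambda>t. \<phi> (t, x)) ` dom_at \<Gamma> x \<subseteq> N \<Longrightarrow> x \<in> \<Lambda>"
    using N by (auto simp: isolating_nbhd_def)
  have orb: "(\<lambda>t. \<phi> (t, x)) ` dom_at \<Gamma> x \<noteq> {}" for x
    using pf_zero[OF pf, of x] by (auto simp: dom_at_def)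
  show ?thesis
  proof (cases "\<Lambda> = {}")
    case True
    have "catenary_function \<Gamma> \<phi> \<Lambda> {} (\<lambda>_. 0)"
      unfolding catenary_function_def isolating_nbhd_def using True orb by auto
    then show ?thesis by blast
  next
    case False
    have closedL: "closed \<Lambda>"
    proof -
      have "closure \<Lambda> \<subseteq> \<Lambda>"
      proof
        fix x assume "x \<in> closure \<Lambda>"
        then obtain s where s: "\<And>n. s n \<in> \<Lambda>" "s \<longlonglongrightarrow> x" by (auto simp: closure_sequential)
        have "(\<lambda>t. \<phi> (t, x)) ` dom_at \<Gamma> x \<subseteq> N"
        proof
          fix z assume "z \<in> (\<lambda>t. \<phi> (t, x)) ` dom_at \<Gamma> x"
          then obtain t where t: "(t, x) \<in> \<Gamma>" "z = \<phi> (t, x)" by (auto simp: dom_at_def)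
          have pl: "((\<lambda>n. (t, s n)) \<longlongrightarrow> (t, x)) sequentially"
            by (intro tendsto_Pair tendsto_const s(2))
          have ev: "eventually (\<lambda>n. (t, s n) \<in> \<Gamma>) sequentially"
            using topological_tendstoD[OF pl pf_open[OF pf] t(1)] .
          have "((\<lambda>n. \<phi> (t, s n)) \<longlongrightarrow> \<phi> (t, x)) sequentially"
            using isCont_tendsto_compose[OF pf_isCont[OF pf t(1)] pl] .
          moreover have "eventually (\<lambda>n. \<phi> (t, s n) \<in> N) sequentially"
            using ev by eventually_elim (use inv s(1) LN interior_subset in blast)
          ultimately have "\<phi> (t, x) \<in> N"
            using Lim_in_closed_set[OF compact_imp_closed[OF Nc], of "\<lambda>n. \<phi> (t, s n)" sequentially] by simp
          then show "z \<in> N" using t(2) by simp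
        qed
        then show "x \<in> \<Lambda>" by (rule Niso)
      qed
      then show ?thesis by (simp add: closure_subset_eq)
    qed
    have LsubN: "\<Lambda> \<subseteq> N" using LN interior_subset by blast
    have compL: "compact \<Lambda>"
    proof -
      have "compact (N \<inter> \<Lambda>)" using Nc closedL by blast
      moreover have "N \<inter> \<Lambda> = \<Lambda>" using LsubN by blast
      ultimately show ?thesis by simp
    qed
    obtain e0 where e0: "e0 > 0" "(\<Union>x\<in>\<Lambda>. ball x e0) \<subseteq> interior N"
      using compact_subset_open_imp_ball_epsilon_subset[OF compL open_interior LN] by blast
    define e where "e = e0 / 4"
    have e: "e > 0" using e0 by (simp add: e_def)
    have near: "y \<in> interior N" if "infdist y \<Lambda> < e0" for y
    proof -
      have "(INF a\<in>\<Lambda>. dist y a) < e0" using that infdist_notempty[OF False] by simp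
      then obtain a where "a \<in> \<Lambda>" "dist y a < e0"
        using cINF_less_iff[OF False, of "dist y" e0] by (auto intro: bdd_belowI[of _ 0])
      then have "y \<in> ball a e0" by (simp add: dist_commute)
      then have "y \<in> (\<Union>x\<in>\<Lambda>. ball x e0)" using \<open>a \<in> \<Lambda>\<close> by (rule UN_I[rotated])
      then show ?thesis using e0(2) by blast
    qed
    define N' where "N' = {y. infdist y \<Lambda> \<le> e}"
    define k where "k y = min 1 (max 0 ((infdist y \<Lambda> - 2 * e) / e))" for y
    have cinf: "continuous_on UNIV (\<lambda>y. infdist y \<Lambda>)"
      by (intro continuous_intros)
    have kc: "continuous_on UNIV k"
      unfolding k_def by (intro continuous_intros) (use e in auto)
    have k01: "0 \<le> k y \<and> k y \<le> 1" for y by (simp add: k_def)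
    have kN: "k y = 1" if "y \<notin> N" for y
    proof -
      have "\<not> infdist y \<Lambda> < e0" using near that interior_subset by blast
      then have "2 \<le> (infdist y \<Lambda> - 2 * e) / e" using e by (simp add: e_def field_simps)
      then show ?thesis by (simp add: k_def)
    qed
    have k0: "k y = 0" if "infdist y \<Lambda> < 2 * e" for y
    proof -
      have "(infdist y \<Lambda> - 2 * e) / e < 0" using that e by (simp add: divide_neg_pos)
      then show ?thesis by (simp add: k_def)
    qed
    have N'N: "N' \<subseteq> N"
    proof
      fix y assume "y \<in> N'"
      then have "infdist y \<Lambda> < e0" using e0 by (simp add: N'_def e_def)
      then show "y \<in> N" using near interior_subset by blast
    qed
    have N'c: "compact N'"
    proof -
      have "closed N'" unfolding N'_def by (rule closed_Collect_le[OF cinf continuous_on_const])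
      then have "compact (N \<inter> N')" using Nc by blast
      moreover have "N \<inter> N' = N'" using N'N by blast
      ultimately show ?thesis by simp
    qed
    have LN': "\<Lambda> \<subseteq> interior N'"
    proof -
      have op: "open {y. infdist y \<Lambda> < e}" by (rule open_Collect_less[OF cinf continuous_on_const])
      have "{y. infdist y \<Lambda> < e} \<subseteq> N'" by (auto simp: N'_def)
      then have "{y. infdist y \<Lambda> < e} \<subseteq> interior N'" using op by (rule interior_maximal)
      moreover have "\<Lambda> \<subseteq> {y. infdist y \<Lambda> < e}" using e by auto
      ultimately show ?thesis by blast
    qed
    have iso': "isolating_nbhd \<Gamma> \<phi> \<Lambda> N'"
      unfolding isolating_nbhd_def
    proof (intro conjI allI impI N'c LN')
      fix x assume "(\<lambda>t. \<phi> (t, x)) ` dom_at \<Gamma> x \<subseteq> N'"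
      then have "(\<lambda>t. \<phi> (t, x)) ` dom_at \<Gamma> x \<subseteq> N" using N'N by (rule subset_trans)
      then show "x \<in> \<Lambda>" by (rule Niso)
    qed
    have rpf: "partial_flow (rG \<Gamma>) (rphi \<phi>)" by (rule rev_pf[OF pf])
    define P where "P = Pf \<Gamma> \<phi> k"
    define Q where "Q = Pf (rG \<Gamma>) (rphi \<phi>) k"
    have Pc: "isCont P x" for x unfolding P_def by (rule Pf_cont[OF pf Nc kc k01 kN])
    have Qc: "isCont Q x" for x unfolding Q_def by (rule Pf_cont[OF rpf Nc kc k01 kN])
    have P0: "0 \<le> P x" for x unfolding P_def by (rule Pf_nonneg[OF pf k01])
    have Q0: "0 \<le> Q x" for x unfolding Q_def by (rule Pf_nonneg[OF rpf k01])
    define L where "L x = P x + Q x" for x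
    define Ld where "Ld x = P x - Q x" for x
    have Lcont: "continuous_on N' L"
      unfolding L_def[abs_def] by (intro continuous_at_imp_continuous_on ballI continuous_intros Pc Qc)
    have Lzero: "L x = 0" if x: "x \<in> \<Lambda>" for x
    proof -
      have "P x = 0" unfolding P_def
        by (rule Pf_zero_if[OF pf]) (use inv[OF x] k0 e in auto)
      moreover have "Q x = 0" unfolding Q_def
        by (rule Pf_zero_if[OF rpf]) (use inv[OF x] k0 e in \<open>auto simp: rG_def rphi_def\<close>)
      ultimately show ?thesis by (simp add: L_def)
    qed
    have Lpos: "L x > 0" if x: "x \<in> N' - \<Lambda>" for x
    proof -
      have "x \<notin> \<Lambda>" using x by simp
      then have "\<not> (\<lambda>t. \<phi> (t, x)) ` dom_at \<Gamma> x \<subseteq> N" using Niso by metis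
      then obtain v where v: "(v, x) \<in> \<Gamma>" "\<phi> (v, x) \<notin> N" by (auto simp: dom_at_def)
      have kv: "k (\<phi> (v, x)) = 1" using kN[OF v(2)] .
      show ?thesis
      proof (cases "0 \<le> v")
        case True
        have "exp (-v) * k (\<phi> (v, x)) \<le> P x" unfolding P_def by (rule Pf_upper[OF k01 v(1) True])
        then have "exp (-v) \<le> P x" using kv by simp
        then have "0 < P x" using exp_gt_zero[of "-v"] by linarith
        then show ?thesis using Q0[of x] by (simp add: L_def)
      next
        case False
        have r: "(-v, x) \<in> rG \<Gamma>" using v by (simp add: rG_def)
        have "exp (-(-v)) * k (rphi \<phi> (-v, x)) \<le> Q x" unfolding Q_def
          by (rule Pf_upper[OF k01 r]) (use False in simp)
        then have "exp v \<le> Q x" using kv by (simp add: rphi_def)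
        then have "0 < Q x" using exp_gt_zero[of v] by linarith
        then show ?thesis using P0[of x] by (simp add: L_def)
      qed
    qed
    have derivs: "has_orbital_deriv \<Gamma> \<phi> N' L (Ld x) x \<and> has_orbital_deriv \<Gamma> \<phi> N' Ld (L x) x"
      if x: "x \<in> N'" for x
    proof -
      have "((\<lambda>p. infdist (\<phi> p) \<Lambda>) \<longlongrightarrow> infdist (\<phi> (0, x)) \<Lambda>) (nhds (0, x))"
        by (rule isCont_nhds) (intro continuous_intros pf_isCont[OF pf pf_zero[OF pf]])
      then have "eventually (\<lambda>p. infdist (\<phi> p) \<Lambda> < 2 * e) (nhds (0, x))"
        using x e by (intro order_tendstoD(2)) (auto simp: N'_def pf_id[OF pf])
      moreover have "eventually (\<lambda>p. p \<in> \<Gamma>) (nhds (0, x))"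
        using eventually_nhds pf_open[OF pf] pf_zero[OF pf] by blast
      ultimately have "eventually (\<lambda>p. p \<in> \<Gamma> \<and> infdist (\<phi> p) \<Lambda> < 2 * e) (nhds (0, x))"
        by (rule eventually_conj[rotated])
      then obtain \<delta> where \<delta>: "\<delta> > 0" "\<And>p. dist p (0, x) < \<delta> \<Longrightarrow> p \<in> \<Gamma> \<and> infdist (\<phi> p) \<Lambda> < 2 * e"
        unfolding eventually_nhds_metric by blast
      have hz: "(s, x) \<in> \<Gamma> \<and> k (\<phi> (s, x)) = 0" if "\<bar>s\<bar> < \<delta>" for s
      proof -
        have "dist (s, x) (0, x) < \<delta>" using that by (simp add: dist_Pair_Pair dist_real_def)
        then show ?thesis using \<delta>(2) k0 by blast
      qed
      have hzr: "(s, x) \<in> rG \<Gamma> \<and> k (rphi \<phi> (s, x)) = 0" if "\<bar>s\<bar> < \<delta>" for s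
        using hz[of "-s"] that by (simp add: rG_def rphi_def)
      have Psh: "P (\<phi> (t, x)) = exp t * P x" if "\<bar>t\<bar> < \<delta>" for t
        unfolding P_def by (rule Pf_shift[OF pf k01 \<delta>(1) hz that])
      have Qsh: "Q (\<phi> (t, x)) = exp (-t) * Q x" if "\<bar>t\<bar> < \<delta>" for t
      proof -
        have "Q (rphi \<phi> (-t, x)) = exp (-t) * Q x"
          unfolding Q_def by (rule Pf_shift[OF rpf k01 \<delta>(1) hzr]) (use that in auto)
        then show ?thesis by (simp add: rphi_def)
      qed
      have ev: "eventually (\<lambda>t. \<bar>t\<bar> < \<delta>) (at (0::real))"
        unfolding eventually_at using \<delta>(1) by (auto simp: dist_real_def)
      have d1: "((\<lambda>t. (L (\<phi> (t, x)) - L x) / t) \<longlongrightarrow> Ld x) (at 0)"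
      proof -
        have "((\<lambda>t::real. (P x * (exp t - 1) + Q x * (exp (-t) - 1)) / t) \<longlongrightarrow> Ld x) (at 0)"
          using lim_comb[of "P x" "Q x"] by (simp add: Ld_def)
        moreover have "eventually (\<lambda>t. (P x * (exp t - 1) + Q x * (exp (-t) - 1)) / t = (L (\<phi> (t, x)) - L x) / t) (at 0)"
          using ev by eventually_elim (simp add: L_def Psh Qsh algebra_simps)
        ultimately show ?thesis by (rule Lim_transform_eventually)
      qed
      have d2: "((\<lambda>t. (Ld (\<phi> (t, x)) - Ld x) / t) \<longlongrightarrow> L x) (at 0)"
      proof -
        have "((\<lambda>t::real. (P x * (exp t - 1) + - Q x * (exp (-t) - 1)) / t) \<longlongrightarrow> L x) (at 0)"
          using lim_comb[of "P x" "- Q x"] by (simp add: L_def)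
        moreover have "eventually (\<lambda>t. (P x * (exp t - 1) + - Q x * (exp (-t) - 1)) / t = (Ld (\<phi> (t, x)) - Ld x) / t) (at 0)"
          using ev by eventually_elim (simp add: Ld_def Psh Qsh algebra_simps)
        ultimately show ?thesis by (rule Lim_transform_eventually)
      qed
      show ?thesis unfolding has_orbital_deriv_def
        by (intro conjI tendsto_mono[OF at_le[OF subset_UNIV] d1] tendsto_mono[OF at_le[OF subset_UNIV] d2])
    qed
    have "catenary_function \<Gamma> \<phi> \<Lambda> N' L"
      unfolding catenary_function_def
    proof (intro conjI iso' Lcont ballI exI[of _ Ld])
      show "L x = 0" if "x \<in> \<Lambda>" for x using Lzero that .
      show "L x > 0" if "x \<in> N' - \<Lambda>" for x using Lpos that .
      show "has_orbital_deriv \<Gamma> \<phi> N' L (Ld x) x" if "x \<in> N'" for x using derivs that by blast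
      show "has_orbital_deriv \<Gamma> \<phi> N' Ld (L x) x" if "x \<in> N'" for x using derivs that by blast
    qed
    then show ?thesis by blast
  qed
qed


end
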